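(* For every $y_0\in Y$, $$\liminf_{T\to\infty}V_T(y_0)\ge d^*(y_0)\qquad\text{and}\qquad\liminf_{\alpha\uparrow1}h_\alpha(y_0)\ge d^*(y_0).$$
   Context: Let $Y\subset\mathbb{R}^m$ be nonempty compact, $U_0$ a compact metric space, $U(\cdot):Y\rightsquigarrow U_0$ upper semicontinuous and compact-valued, and $f:\mathbb{R}^m\times U_0\to\mathbb{R}^m$, $k:\mathbb{R}^m\times U_0\to\mathbb{R}$ continuous. Put $A(y):=\{u\in U(y): f(y,u)\in Y\}$ and $G:=\{(y,u): y\in Y,\ u\in A(y)\}$. Standing assumption: $A(y)\ne\emptyset$ for all $y\in Y$. For $y_0\in Y$, an admissible process on $\{0,\dots,T-1\}$ (respectively on $\{0,1,\dots\}$) is a pair $(y(t),u(t))$ with $y(0)=y_0$, $u(t)\in A(y(t))$ and $y(t+1)=f(y(t),u(t))$. The controls of such processes form $\mathcal U_T(y_0)$ (respectively $\mathcal U(y_0)$). Value functions: for $T\in\mathbb N$ and $\alpha\in(0,1)$, $$V_T(y_0):=\frac1T\min_{u\in\mathcal U_T(y_0)}\sum_{t=0}^{T-1}k(y(t),u(t)),\qquad h_\alpha(y_0):=(1-\alpha)\min_{u\in\mathcal U(y_0)}\sum_{t=0}^\infty\alpha^tk(y(t),u(t)).$$ Dual value: $d^*(y_0):=\sup\mu$, where the supremum is over triples $(\mu,\psi,\eta)\in\mathbb{R}\times C(Y)\times C(Y)$ such that for all $(y,u)\in G$: $$k(y,u)+\psi(y_0)-\psi(y)+\eta(f(y,u))-\eta(y)-\mu\ge0,\qquad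 \psi(f(y,u))-\psi(y)\ge0.$$ *)

theory Defs
  imports "HOL-Analysis.Analysis"
begin

definition usc_on :: "'a::metric_space set \<Rightarrow> ('a \<Rightarrow> 'b::topological_space set) \<Rightarrow> bool" where
  "usc_on Y U \<longleftrightarrow> (\<forall>y\<in>Y. \<forall>W. open W \<and> U y \<subseteq> W \<longrightarrow>
      (\<exists>e>0. \<forall>y'\<in>Y. dist y' y < e \<longrightarrow> U y' \<subseteq> W))"

definition adm :: "'a set \<Rightarrow> ('a \<Rightarrow> 'b set) \<Rightarrow> ('a \<Rightarrow> 'b \<Rightarrow> 'a) \<Rightarrow> 'a \<Rightarrow> 'b set" where
  "adm Y U f y = {u \<in> U y. f y u \<in> Y}"

definition graphG :: "'a set \<Rightarrow> ('a \<Rightarrow> 'b set) \<Rightarrow> ('a \<Rightarrow> 'b \<Rightarrow> 'a) \<Rightarrow> ('a \<times> 'b) set" where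
  "graphG Y U f = {(y, u). y \<in> Y \<and> u \<in> adm Y U f y}"

fun traj :: "('a \<Rightarrow> 'b \<Rightarrow> 'a) \<Rightarrow> 'a \<Rightarrow> (nat \<Rightarrow> 'b) \<Rightarrow> nat \<Rightarrow> 'a" where
  "traj f y0 u 0 = y0"
| "traj f y0 u (Suc t) = f (traj f y0 u t) (u t)"

text \<open>Controls of admissible processes on {0..T-1} (values after T-1 irrelevant).\<close>
definition ctrlT :: "'a set \<Rightarrow> ('a \<Rightarrow> 'b set) \<Rightarrow> ('a \<Rightarrow> 'b \<Rightarrow> 'a) \<Rightarrow> nat \<Rightarrow> 'a \<Rightarrow> (nat \<Rightarrow> 'b) set" where
  "ctrlT Y U f T y0 = {u. \<forall>t<T. u t \<in> adm Y U f (traj f y0 u t)}"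

definition ctrl :: "'a set \<Rightarrow> ('a \<Rightarrow> 'b set) \<Rightarrow> ('a \<Rightarrow> 'b \<Rightarrow> 'a) \<Rightarrow> 'a \<Rightarrow> (nat \<Rightarrow> 'b) set" where
  "ctrl Y U f y0 = {u. \<forall>t. u t \<in> adm Y U f (traj f y0 u t)}"

text \<open>Minimum written as infimum (the minimum is attained under the standing hypotheses).\<close>
definition VT :: "'a set \<Rightarrow> ('a \<Rightarrow> 'b set) \<Rightarrow> ('a \<Rightarrow> 'b \<Rightarrow> 'a) \<Rightarrow> ('a \<Rightarrow> 'b \<Rightarrow> real) \<Rightarrow> nat \<Rightarrow> 'a \<Rightarrow> real" where
  "VT Y U f k T y0 = (1 / real T) *
     (INF u\<in>ctrlT Y U f T y0. \<Sum>t<T. k (traj f y0 u t) (u t))"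

definition h_disc :: "'a set \<Rightarrow> ('a \<Rightarrow> 'b set) \<Rightarrow> ('a \<Rightarrow> 'b \<Rightarrow> 'a) \<Rightarrow> ('a \<Rightarrow> 'b \<Rightarrow> real) \<Rightarrow> real \<Rightarrow> 'a \<Rightarrow> real" where
  "h_disc Y U f k \<alpha> y0 = (1 - \<alpha>) *
     (INF u\<in>ctrl Y U f y0. (\<Sum>t. \<alpha> ^ t * k (traj f y0 u t) (u t)))"

definition dstar :: "'a::topological_space set \<Rightarrow> ('a \<Rightarrow> 'b set) \<Rightarrow> ('a \<Rightarrow> 'b \<Rightarrow> 'a) \<Rightarrow> ('a \<Rightarrow> 'b \<Rightarrow> real) \<Rightarrow> 'a \<Rightarrow> ereal" where
  "dstar Y U f k y0 = Sup {ereal \<mu> | \<mu> \<psi> \<eta>.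
      continuous_on Y \<psi> \<and> continuous_on Y \<eta> \<and>
      (\<forall>(y, u)\<in>graphG Y U f.
          k y u + \<psi> y0 - \<psi> y + \<eta> (f y u) - \<eta> y - \<mu> \<ge> 0 \<and>
          \<psi> (f y u) - \<psi> y \<ge> 0)}"

end

theory Submission
  imports Defs
begin

lemma traj_props:
  fixes \<psi> \<eta> :: "'a \<Rightarrow> real" and k :: "'a \<Rightarrow> 'b \<Rightarrow> real" and \<mu> :: real
  assumes feas: "\<forall>(y,u)\<in>graphG Y U f. k y u + \<psi> y0 - \<psi> y + \<eta> (f y u) - \<eta> y - \<mu> \<ge> 0 \<and> \<psi> (f y u) - \<psi> y \<ge> 0"
    and y0: "y0 \<in> Y" and u: "u \<in> ctrlT Y U f T y0" and t: "t \<le> T"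
  shows "traj f y0 u t \<in> Y \<and> \<psi> y0 \<le> \<psi> (traj f y0 u t)"
  using t
proof (induction t)
  case 0 thus ?case using y0 by simp
next
  case (Suc t)
  then have tT: "t < T" and IH: "traj f y0 u t \<in> Y \<and> \<psi> y0 \<le> \<psi> (traj f y0 u t)" by auto
  have ua: "u t \<in> adm Y U f (traj f y0 u t)" using u tT by (simp add: ctrlT_def)
  have G: "(traj f y0 u t, u t) \<in> graphG Y U f" using IH ua by (simp add: graphG_def)
  have "\<psi> (f (traj f y0 u t) (u t)) - \<psi> (traj f y0 u t) \<ge> 0" using bspec[OF feas G] by simp
  moreover have "f (traj f y0 u t) (u t) \<in> Y" using ua by (simp add: adm_def)
  ultimately show ?case using IH by simp
qed

lemma step_bound:
  fixes \<psi> \<eta> :: "'a \<Rightarrow> real" and k :: "'a \<Rightarrow> 'b \<Rightarrow> real" and \<mu> :: real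
  assumes feas: "\<forall>(y,u)\<in>graphG Y U f. k y u + \<psi> y0 - \<psi> y + \<eta> (f y u) - \<eta> y - \<mu> \<ge> 0 \<and> \<psi> (f y u) - \<psi> y \<ge> 0"
    and y0: "y0 \<in> Y" and u: "u \<in> ctrlT Y U f T y0" and t: "t < T"
  shows "(traj f y0 u t, u t) \<in> graphG Y U f \<and>
     \<mu> - \<eta> (traj f y0 u (Suc t)) + \<eta> (traj f y0 u t) \<le> k (traj f y0 u t) (u t)"
proof -
  have IH: "traj f y0 u t \<in> Y \<and> \<psi> y0 \<le> \<psi> (traj f y0 u t)"
    using traj_props[OF feas y0 u] t by simp
  have ua: "u t \<in> adm Y U f (traj f y0 u t)" using u t by (simp add: ctrlT_def)
  have G: "(traj f y0 u t, u t) \<in> graphG Y U f" using IH ua by (simp add: graphG_def)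
  have "k (traj f y0 u t) (u t) + \<psi> y0 - \<psi> (traj f y0 u t) + \<eta> (f (traj f y0 u t) (u t)) - \<eta> (traj f y0 u t) - \<mu> \<ge> 0"
    using bspec[OF feas G] by simp
  then show ?thesis using G IH by simp
qed

lemma fin_bound:
  fixes \<psi> \<eta> :: "'a \<Rightarrow> real" and k :: "'a \<Rightarrow> 'b \<Rightarrow> real" and \<mu> :: real
  assumes feas: "\<forall>(y,u)\<in>graphG Y U f. k y u + \<psi> y0 - \<psi> y + \<eta> (f y u) - \<eta> y - \<mu> \<ge> 0 \<and> \<psi> (f y u) - \<psi> y \<ge> 0"
    and y0: "y0 \<in> Y" and u: "u \<in> ctrlT Y U f T y0" and M: "\<forall>y\<in>Y. \<bar>\<eta> y\<bar> \<le> M"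
  shows "real T * \<mu> - 2 * M \<le> (\<Sum>t<T. k (traj f y0 u t) (u t))"
proof -
  have "(\<Sum>t<T. \<mu> - (\<eta> (traj f y0 u (Suc t)) - \<eta> (traj f y0 u t))) \<le> (\<Sum>t<T. k (traj f y0 u t) (u t))"
    by (rule sum_mono) (use step_bound[OF feas y0 u] in force)
  moreover have "(\<Sum>t<T. \<mu> - (\<eta> (traj f y0 u (Suc t)) - \<eta> (traj f y0 u t)))
      = real T * \<mu> - (\<eta> (traj f y0 u T) - \<eta> (traj f y0 u 0))"
    by (subst sum_subtractf, subst sum_lessThan_telescope, simp)
  moreover have "traj f y0 u T \<in> Y" using traj_props[OF feas y0 u] by simp
  moreover have "\<bar>\<eta> (traj f y0 u T)\<bar> \<le> M" "\<bar>\<eta> y0\<bar> \<le> M" using M y0 \<open>traj f y0 u T \<in> Y\<close> by auto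
  ultimately show ?thesis by simp
qed

lemma ctrl_ctrlT: "u \<in> ctrl Y U f y0 \<Longrightarrow> u \<in> ctrlT Y U f T y0"
  by (simp add: ctrl_def ctrlT_def)

lemma inf_bound:
  fixes \<psi> \<eta> :: "'a \<Rightarrow> real" and k :: "'a \<Rightarrow> 'b \<Rightarrow> real" and \<mu> :: real
  assumes feas: "\<forall>(y,u)\<in>graphG Y U f. k y u + \<psi> y0 - \<psi> y + \<eta> (f y u) - \<eta> y - \<mu> \<ge> 0 \<and> \<psi> (f y u) - \<psi> y \<ge> 0"
    and y0: "y0 \<in> Y" and u: "u \<in> ctrl Y U f y0" and M: "\<forall>y\<in>Y. \<bar>\<eta> y\<bar> \<le> M"
    and K: "\<forall>(y,v)\<in>graphG Y U f. \<bar>k y v\<bar> \<le> K"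
    and a0: "0 < \<alpha>" and a1: "\<alpha> < 1"
  shows "\<mu> - 2 * (1 - \<alpha>) * M \<le> (1 - \<alpha>) * (\<Sum>t. \<alpha> ^ t * k (traj f y0 u t) (u t))"
proof -
  define x where "x = traj f y0 u"
  define e where "e t = \<eta> (x t)" for t
  define a where "a t = \<alpha> ^ t * k (x t) (u t)" for t
  have uT: "\<And>T. u \<in> ctrlT Y U f T y0" using ctrl_ctrlT[OF u] .
  have xY: "x t \<in> Y" for t using traj_props[OF feas y0 uT[of t]] by (simp add: x_def)
  have st: "(x t, u t) \<in> graphG Y U f \<and> \<mu> - e (Suc t) + e t \<le> k (x t) (u t)" for t
    using step_bound[OF feas y0 uT[of "Suc t"], of t] by (simp add: x_def e_def)
  have eM: "\<bar>e t\<bar> \<le> M" for t using M xY by (simp add: e_def)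
  have kK: "\<bar>k (x t) (u t)\<bar> \<le> K" for t using K st[of t] by blast
  have geo: "summable (\<lambda>t. \<alpha> ^ t)" using a0 a1 by (intro summable_geometric) simp
  have sumK: "summable (\<lambda>t. \<alpha> ^ t * K)" using geo by (rule summable_mult2)
  have sumM: "summable (\<lambda>t. \<alpha> ^ t * M)" using geo by (rule summable_mult2)
  have sa: "summable a"
  proof (rule summable_comparison_test[OF _ sumK])
    show "\<exists>N. \<forall>n\<ge>N. norm (a n) \<le> \<alpha> ^ n * K"
      using kK a0 by (auto simp: a_def abs_mult intro!: mult_left_mono)
  qed
  have se0: "summable (\<lambda>t. \<alpha> ^ t * e t)"
  proof (rule summable_comparison_test[OF _ sumM])
    show "\<exists>N. \<forall>n\<ge>N. norm (\<alpha> ^ n * e n) \<le> \<alpha> ^ n * M"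
      using eM a0 by (auto simp: abs_mult intro!: mult_left_mono)
  qed
  have se1: "summable (\<lambda>t. \<alpha> ^ t * e (Suc t))"
  proof (rule summable_comparison_test[OF _ sumM])
    show "\<exists>N. \<forall>n\<ge>N. norm (\<alpha> ^ n * e (Suc n)) \<le> \<alpha> ^ n * M"
      using eM a0 by (auto simp: abs_mult intro!: mult_left_mono)
  qed
  have smu: "summable (\<lambda>t. \<alpha> ^ t * \<mu>)" using geo by (rule summable_mult2)
  define S0 where "S0 = (\<Sum>t. \<alpha> ^ t * e t)"
  define S1 where "S1 = (\<Sum>t. \<alpha> ^ t * e (Suc t))"
  have lb: "(\<Sum>t. \<alpha> ^ t * \<mu> - \<alpha> ^ t * e (Suc t) + \<alpha> ^ t * e t) \<le> suminf a"
  proof (rule suminf_le)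
    show "\<And>n. \<alpha> ^ n * \<mu> - \<alpha> ^ n * e (Suc n) + \<alpha> ^ n * e n \<le> a n"
      using st a0 unfolding a_def
      by (metis (no_types, lifting) distrib_left mult_left_mono right_diff_distrib zero_le_power less_imp_le)
    show "summable (\<lambda>n. \<alpha> ^ n * \<mu> - \<alpha> ^ n * e (Suc n) + \<alpha> ^ n * e n)"
      using smu se1 se0 by (intro summable_add summable_diff)
  qed (fact sa)
  have eq: "(\<Sum>t. \<alpha> ^ t * \<mu> - \<alpha> ^ t * e (Suc t) + \<alpha> ^ t * e t) = \<mu> / (1 - \<alpha>) - S1 + S0"
  proof -
    have "(\<Sum>t. \<alpha> ^ t * \<mu> - \<alpha> ^ t * e (Suc t) + \<alpha> ^ t * e t)
        = (\<Sum>t. \<alpha> ^ t * \<mu>) - S1 + S0"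
      unfolding S0_def S1_def using smu se1 se0
      by (simp add: suminf_add[symmetric] suminf_diff[symmetric] summable_diff)
    moreover have "(\<Sum>t. \<alpha> ^ t * \<mu>) = \<mu> / (1 - \<alpha>)"
      using suminf_mult2[OF geo, of \<mu>] suminf_geometric[of \<alpha>] a0 a1 by simp
    ultimately show ?thesis by simp
  qed
  have S0eq: "S0 = e 0 + \<alpha> * S1"
  proof -
    have "(\<Sum>t. \<alpha> ^ Suc t * e (Suc t)) = S0 - e 0"
      using suminf_split_head[OF se0] by (simp add: S0_def)
    moreover have "(\<Sum>t. \<alpha> ^ Suc t * e (Suc t)) = \<alpha> * S1"
      unfolding S1_def using suminf_mult[OF se1, of \<alpha>] by (simp add: mult.assoc)
    ultimately show ?thesis by simp
  qed
  have S1le: "S1 \<le> M / (1 - \<alpha>)"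
  proof -
    have "S1 \<le> (\<Sum>t. \<alpha> ^ t * M)" unfolding S1_def
      by (rule suminf_le[OF _ se1 sumM]) (use eM a0 in \<open>auto intro!: mult_left_mono simp: abs_le_iff\<close>)
    also have "\<dots> = M / (1 - \<alpha>)"
      using suminf_mult2[OF geo, of M] suminf_geometric[of \<alpha>] a0 a1 by simp
    finally show ?thesis .
  qed
  have e0: "- M \<le> e 0" using eM[of 0] by simp
  have "suminf a \<ge> \<mu> / (1 - \<alpha>) + e 0 - (1 - \<alpha>) * S1"
    using lb eq S0eq by (simp add: algebra_simps)
  then have "(1 - \<alpha>) * suminf a \<ge> (1 - \<alpha>) * (\<mu> / (1 - \<alpha>) + e 0 - (1 - \<alpha>) * S1)"
    using a1 by (intro mult_left_mono) auto
  also have "(1 - \<alpha>) * (\<mu> / (1 - \<alpha>) + e 0 - (1 - \<alpha>) * S1) = \<mu> + (1 - \<alpha>) * e 0 - (1 - \<alpha>) * ((1 - \<alpha>) * S1)"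
    using a1 by (simp add: field_simps)
  finally have A: "(1 - \<alpha>) * suminf a \<ge> \<mu> + (1 - \<alpha>) * e 0 - (1 - \<alpha>) * ((1 - \<alpha>) * S1)" .
  have B: "(1 - \<alpha>) * S1 \<le> M" using S1le a1 by (simp add: field_simps)
  have C: "(1 - \<alpha>) * ((1 - \<alpha>) * S1) \<le> (1 - \<alpha>) * M" using B a1 by (intro mult_left_mono) auto
  have D: "(1 - \<alpha>) * (- M) \<le> (1 - \<alpha>) * e 0" using e0 a1 by (intro mult_left_mono) auto
  have "\<mu> - 2 * (1 - \<alpha>) * M \<le> (1 - \<alpha>) * suminf a" using A C D by (simp add: algebra_simps)
  moreover have "a = (\<lambda>t. \<alpha> ^ t * k (traj f y0 u t) (u t))" by (simp add: fun_eq_iff a_def x_def)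
  ultimately show ?thesis by simp
qed

lemma ereal_eps_aux: "(\<And>e::real. 0 < e \<Longrightarrow> ereal (\<mu> - e) \<le> L) \<Longrightarrow> ereal \<mu> \<le> L"
proof (rule ereal_le_epsilon2)
  fix e :: real assume "0 < e" "(\<And>e::real. 0 < e \<Longrightarrow> ereal (\<mu> - e) \<le> L)"
  then have "ereal (\<mu> - e) \<le> L" by blast
  then show "ereal \<mu> \<le> L + ereal e" by (cases L) auto
qed

theorem proposition2p3:
  fixes Y :: "'a::euclidean_space set"
    and U0 :: "'b::metric_space set"
    and U :: "'a \<Rightarrow> 'b set"
    and f :: "'a \<Rightarrow> 'b \<Rightarrow> 'a"
    and k :: "'a \<Rightarrow> 'b \<Rightarrow> real"
    and y0 :: 'a
  assumes "compact Y" and "Y \<noteq> {}"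
    and "compact U0"
    and "\<forall>y\<in>Y. U y \<subseteq> U0"
    and "usc_on Y U"
    and "\<forall>y\<in>Y. compact (U y)"
    and "continuous_on (UNIV \<times> U0) (\<lambda>(y, u). f y u)"
    and "continuous_on (UNIV \<times> U0) (\<lambda>(y, u). k y u)"
    and "\<forall>y\<in>Y. adm Y U f y \<noteq> {}"
    and "y0 \<in> Y"
  shows "Liminf sequentially (\<lambda>T. ereal (VT Y U f k T y0)) \<ge> dstar Y U f k y0
       \<and> Liminf (at_left 1) (\<lambda>\<alpha>. ereal (h_disc Y U f k \<alpha> y0)) \<ge> dstar Y U f k y0"
proof -
  define sel where "sel y = (SOME v. v \<in> adm Y U f y)" for y
  have sel: "sel y \<in> adm Y U f y" if "y \<in> Y" for y
    using assms(9) that unfolding sel_def by (metis ex_in_conv someI_ex)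
  define xs where "xs = rec_nat y0 (\<lambda>_ y. f y (sel y))"
  define uc where "uc t = sel (xs t)" for t
  have xs: "xs t \<in> Y \<and> traj f y0 uc t = xs t" for t
  proof (induction t)
    case 0 then show ?case using assms(10) by (simp add: xs_def)
  next
    case (Suc t)
    then have "sel (xs t) \<in> adm Y U f (xs t)" using sel by blast
    then show ?case using Suc by (simp add: xs_def uc_def adm_def)
  qed
  have ucc: "uc \<in> ctrl Y U f y0" using xs sel by (simp add: ctrl_def uc_def)
  have ucT: "uc \<in> ctrlT Y U f T y0" for T using ctrl_ctrlT[OF ucc] .
  have "compact ((\<lambda>(y, u). k y u) ` (Y \<times> U0))"
    by (rule compact_continuous_image[OF continuous_on_subset[OF assms(8)]])
       (use assms(1,3) in \<open>auto intro: compact_Times\<close>)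
  then obtain K where K0: "\<forall>z\<in>(\<lambda>(y, u). k y u) ` (Y \<times> U0). norm z \<le> K"
    using compact_imp_bounded bounded_iff by metis
  have K: "\<forall>(y,v)\<in>graphG Y U f. \<bar>k y v\<bar> \<le> K"
  proof (clarify)
    fix y v assume "(y, v) \<in> graphG Y U f"
    then have "y \<in> Y" "v \<in> U0" using assms(4) by (auto simp: graphG_def adm_def)
    then show "\<bar>k y v\<bar> \<le> K" using K0 by force
  qed
  have main: "z \<le> Liminf sequentially (\<lambda>T. ereal (VT Y U f k T y0))
      \<and> z \<le> Liminf (at_left 1) (\<lambda>\<alpha>. ereal (h_disc Y U f k \<alpha> y0))"
    if zin: "z \<in> {ereal \<mu> | \<mu> \<psi> \<eta>.
      continuous_on Y \<psi> \<and> continuous_on Y \<eta> \<and>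
      (\<forall>(y, u)\<in>graphG Y U f.
          k y u + \<psi> y0 - \<psi> y + \<eta> (f y u) - \<eta> y - \<mu> \<ge> 0 \<and>
          \<psi> (f y u) - \<psi> y \<ge> 0)}" for z
  proof -
    obtain \<mu> \<psi> \<eta> where z: "z = ereal \<mu>" and c\<eta>: "continuous_on Y \<eta>"
      and feas: "\<forall>(y, u)\<in>graphG Y U f.
          k y u + \<psi> y0 - \<psi> y + \<eta> (f y u) - \<eta> y - \<mu> \<ge> 0 \<and>
          \<psi> (f y u) - \<psi> y \<ge> 0" using zin by blast
    have "compact (\<eta> ` Y)" by (rule compact_continuous_image[OF c\<eta> assms(1)])
    then obtain M where M0: "\<forall>z\<in>\<eta> ` Y. norm z \<le> M"
      using compact_imp_bounded bounded_iff by metis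
    have M: "\<forall>y\<in>Y. \<bar>\<eta> y\<bar> \<le> M" using M0 by auto
    have Mpos: "0 \<le> M" using M assms(10) by force
    have A: "ereal \<mu> \<le> Liminf sequentially (\<lambda>T. ereal (VT Y U f k T y0))"
    proof (rule ereal_eps_aux)
      fix e :: real assume e: "0 < e"
      obtain N :: nat where N: "2 * M / e < real N" using reals_Archimedean2 by blast
      have Npos: "0 < real N" using N Mpos e by (smt (verit) divide_nonneg_pos)
      show "ereal (\<mu> - e) \<le> Liminf sequentially (\<lambda>T. ereal (VT Y U f k T y0))"
      proof (rule Liminf_bounded, rule eventually_sequentiallyI[of N])
        fix T assume "N \<le> T"
        then have TN: "real N \<le> real T" by simp
        then have Tpos: "0 < real T" using Npos by linarith
        have inf: "real T * \<mu> - 2 * M \<le> (INF u\<in>ctrlT Y U f T y0. \<Sum>t<T. k (traj f y0 u t) (u t))"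
          by (rule cINF_greatest) (use ucT fin_bound[OF feas assms(10) _ M] in auto)
        have "2 * M / real T \<le> 2 * M / real N"
          using TN Npos Mpos by (intro divide_left_mono) auto
        also have "\<dots> < e" using N Npos e by (simp add: field_simps)
        finally have le: "2 * M / real T < e" .
        have "\<mu> - e \<le> (1 / real T) * (real T * \<mu> - 2 * M)"
          using le Tpos by (simp add: field_simps)
        also have "\<dots> \<le> VT Y U f k T y0"
          unfolding VT_def using inf Tpos by (intro mult_left_mono) auto
        finally show "ereal (\<mu> - e) \<le> ereal (VT Y U f k T y0)" by simp
      qed
    qed
    have B: "ereal \<mu> \<le> Liminf (at_left 1) (\<lambda>\<alpha>. ereal (h_disc Y U f k \<alpha> y0))"
    proof (rule ereal_eps_aux)
      fix e :: real assume e: "0 < e"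
      define b where "b = max 0 (1 - e / (2 * M + 1))"
      have b1: "b < 1" using e Mpos by (simp add: b_def)
      show "ereal (\<mu> - e) \<le> Liminf (at_left 1) (\<lambda>\<alpha>. ereal (h_disc Y U f k \<alpha> y0))"
      proof (rule Liminf_bounded)
        show "\<forall>\<^sub>F \<alpha> in at_left 1. ereal (\<mu> - e) \<le> ereal (h_disc Y U f k \<alpha> y0)"
          using eventually_at_left_real[OF b1]
        proof (rule eventually_mono)
          fix \<alpha> :: real assume "\<alpha> \<in> {b<..<1}"
          then have a0: "0 < \<alpha>" and a1: "\<alpha> < 1" and ab: "1 - e / (2 * M + 1) < \<alpha>"
            by (auto simp: b_def)
          have inf: "(\<mu> - 2 * (1 - \<alpha>) * M) / (1 - \<alpha>) \<le> (INF u\<in>ctrl Y U f y0. \<Sum>t. \<alpha> ^ t * k (traj f y0 u t) (u t))"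
          proof (rule cINF_greatest)
            show "ctrl Y U f y0 \<noteq> {}" using ucc by blast
            fix u assume "u \<in> ctrl Y U f y0"
            from inf_bound[OF feas assms(10) this M K a0 a1]
            show "(\<mu> - 2 * (1 - \<alpha>) * M) / (1 - \<alpha>) \<le> (\<Sum>t. \<alpha> ^ t * k (traj f y0 u t) (u t))"
              using a1 by (simp add: field_simps)
          qed
          have "1 - \<alpha> < e / (2 * M + 1)" using ab by linarith
          then have "(1 - \<alpha>) * (2 * M + 1) < e" using Mpos by (simp add: pos_less_divide_eq)
          moreover have "2 * (1 - \<alpha>) * M \<le> (1 - \<alpha>) * (2 * M + 1)" using a1 by (simp add: algebra_simps)
          ultimately have "2 * (1 - \<alpha>) * M \<le> e" by linarith
          then have "\<mu> - e \<le> (1 - \<alpha>) * ((\<mu> - 2 * (1 - \<alpha>) * M) / (1 - \<alpha>))"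
            using a1 by simp
          also have "\<dots> \<le> h_disc Y U f k \<alpha> y0"
            unfolding h_disc_def using inf a1 by (intro mult_left_mono) auto
          finally show "ereal (\<mu> - e) \<le> ereal (h_disc Y U f k \<alpha> y0)" by simp
        qed
      qed
    qed
    show ?thesis using A B z by simp
  qed
  show ?thesis unfolding dstar_def
    using main by (auto intro!: Sup_least)
qed

end
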